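(* Let $A\in\mathfrak{H}_n$, $B\in\mathfrak{M}_n$, $N\in\mathbb{N}$. Then the $N$-approximant satisfies $\big(e^{tA/N}e^{B/N}\big)^N=\sum_{\lambda\in ch_N(\sigma(A))}e^{t\lambda}M_N(\{\lambda\})$ for all $t\in\mathbb{C}$, and the total variation of the discrete measure $M_N$ satisfies \[ \sum_{\lambda\in ch_N(\sigma(A))}\|M_N(\{\lambda\})\|\le n\,e^{n\|B\|}. \]
   Context: Let $\lambda_1,\dots,\lambda_l$ be the distinct eigenvalues of the Hermitian matrix $A$ and $E_{\lambda_1},\dots,E_{\lambda_l}$ the corresponding orthogonal spectral projectors. For $(k_1,\dots,k_N)\in\{1,\dots,l\}^N$, $M_{k_1,\dots,k_N}=E_{\lambda_{k_1}}e^{B/N}\cdots E_{\lambda_{k_N}}e^{B/N}$. The $N$-convex hull $ch_N(\sigma(A))$ is the set of all numbers $\sum_j\frac{n_j}{N}\lambda_j$ with $n_j$ non-negative integers, $n_1+\dots+n_l=N$. For $\lambda\in ch_N(\sigma(A))$, $M_N(\{\lambda\})=\sum M_{k_1,\dots,k_N}$ over all $(k_1,\dots,k_N)$ with $\frac{\lambda_{k_1}+\cdots+\lambda_{k_N}}{N}=\lambda$. $\|\cdot\|$ is the operator norm. *)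

theory Defs
  imports "HOL-Analysis.Analysis"
begin

text \<open>Complex n x n matrices are rendered as complex^'n^'n (dimension n = CARD('n)).\<close>

definition hermitian :: "complex^'n^'n \<Rightarrow> bool" where
  "hermitian A \<longleftrightarrow> (\<forall>i j. A $ i $ j = cnj (A $ j $ i))"

definition cmat_adj :: "complex^'n^'n \<Rightarrow> complex^'n^'n" where
  "cmat_adj A = (\<chi> i j. cnj (A $ j $ i))"

definition cmat_scale :: "complex \<Rightarrow> complex^'n^'n \<Rightarrow> complex^'n^'n" where
  "cmat_scale c A = (\<chi> i j. c * A $ i $ j)"

fun matpow :: "complex^'n^'n \<Rightarrow> nat \<Rightarrow> complex^'n^'n" where
  "matpow M 0 = mat 1"
| "matpow M (Suc k) = M ** matpow M k"

definition mexp :: "complex^'n^'n \<Rightarrow> complex^'n^'n" where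
  "mexp M = (\<Sum>k. scaleR (inverse (fact k)) (matpow M k))"

definition opnorm :: "complex^'n^'n \<Rightarrow> real" where
  "opnorm M = onorm (\<lambda>x. M *v x)"

definition spec :: "complex^'n^'n \<Rightarrow> complex set" where
  "spec A = {c. \<exists>v. v \<noteq> 0 \<and> A *v v = c *s v}"

definition spec_proj :: "complex^'n^'n \<Rightarrow> complex \<Rightarrow> complex^'n^'n" where
  "spec_proj A c = (THE E. E ** E = E \<and> cmat_adj E = E \<and>
       range (\<lambda>x. E *v x) = {v. A *v v = c *s v})"

definition chN :: "nat \<Rightarrow> complex set \<Rightarrow> complex set" where
  "chN N S = {\<Sum>\<mu>\<in>S. (of_nat (m \<mu>) / of_nat N) * \<mu> | m. (\<Sum>\<mu>\<in>S. m \<mu>) = N}"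

text \<open>M_{k_1..k_N} = E_{k_1} e^{B/N} ... E_{k_N} e^{B/N}, indexed directly by the
  list of eigenvalues [lambda_{k_1},...,lambda_{k_N}].\<close>
definition Mword :: "complex^'n^'n \<Rightarrow> complex^'n^'n \<Rightarrow> nat \<Rightarrow> complex list \<Rightarrow> complex^'n^'n" where
  "Mword A B N ls = foldr (\<lambda>\<mu> P. spec_proj A \<mu> ** mexp (cmat_scale (1 / of_nat N) B) ** P) ls (mat 1)"

definition MN :: "complex^'n^'n \<Rightarrow> complex^'n^'n \<Rightarrow> nat \<Rightarrow> complex \<Rightarrow> complex^'n^'n" where
  "MN A B N c = (\<Sum>ls\<in>{ls. length ls = N \<and> set ls \<subseteq> spec A \<and> sum_list ls / of_nat N = c}.
                    Mword A B N ls)"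

end

theory Submission
  imports Defs
begin


type_synonym 'n cm = "complex^'n^'n"

lemma bl_mv: "bounded_linear (\<lambda>x. (M::complex^'n^'n) *v x)"
  using matrix_vector_mul_linear linear_conv_bounded_linear by blast

lemma opnorm_mv: "norm ((M::complex^'n^'n) *v x) \<le> opnorm M * norm x"
  unfolding opnorm_def by (rule onorm[OF bl_mv])

lemma opnorm_ge0: "0 \<le> opnorm (M::complex^'n^'n)"
  unfolding opnorm_def by (rule onorm_pos_le[OF bl_mv])

lemma opnorm_leI: "0 \<le> c \<Longrightarrow> (\<And>x. norm ((M::complex^'n^'n) *v x) \<le> c * norm x) \<Longrightarrow> opnorm M \<le> c"
  unfolding opnorm_def by (rule onorm_bound)

lemma opnorm_mult: "opnorm ((M::complex^'n^'n) ** P) \<le> opnorm M * opnorm P"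
proof (rule opnorm_leI)
  show "0 \<le> opnorm M * opnorm P" by (simp add: opnorm_ge0)
  fix x
  have "norm ((M ** P) *v x) = norm (M *v (P *v x))" by (simp add: matrix_vector_mul_assoc)
  also have "\<dots> \<le> opnorm M * norm (P *v x)" by (rule opnorm_mv)
  also have "\<dots> \<le> opnorm M * (opnorm P * norm x)"
    by (rule mult_left_mono[OF opnorm_mv opnorm_ge0])
  finally show "norm ((M ** P) *v x) \<le> opnorm M * opnorm P * norm x" by simp
qed

lemma opnorm_add: "opnorm ((M::complex^'n^'n) + P) \<le> opnorm M + opnorm P"
proof (rule opnorm_leI)
  show "0 \<le> opnorm M + opnorm P" by (simp add: opnorm_ge0 add_nonneg_nonneg)
  fix x
  have "norm ((M + P) *v x) = norm (M *v x + P *v x)" by (simp add: matrix_vector_mult_add_rdistrib)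
  also have "\<dots> \<le> norm (M *v x) + norm (P *v x)" by (rule norm_triangle_ineq)
  also have "\<dots> \<le> opnorm M * norm x + opnorm P * norm x" by (intro add_mono opnorm_mv)
  finally show "norm ((M + P) *v x) \<le> (opnorm M + opnorm P) * norm x" by (simp add: algebra_simps)
qed

lemma opnorm_sum: "finite S \<Longrightarrow> opnorm (\<Sum>i\<in>S. (f i::complex^'n^'n)) \<le> (\<Sum>i\<in>S. opnorm (f i))"
proof (induction S rule: finite_induct)
  case empty
  have "opnorm (0::complex^'n^'n) \<le> 0" by (rule opnorm_leI) auto
  then show ?case by simp
next
  case (insert a S)
  then show ?case using opnorm_add[of "f a" "sum f S"] by simp
qed

lemma opnorm_id: "opnorm (mat 1 :: complex^'n^'n) \<le> 1"
  by (rule opnorm_leI) auto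

lemma norm_smult_vec: "norm (c *s (v::complex^'n)) = cmod c * norm v"
  unfolding norm_vec_def by (simp add: norm_mult L2_set_right_distrib)

lemma cmat_scale_mv: "cmat_scale c M *v x = c *s (M *v x)"
  by (simp add: cmat_scale_def matrix_vector_mult_def vec_eq_iff sum_distrib_left mult.assoc)

lemma opnorm_scale: "opnorm (cmat_scale c (M::complex^'n^'n)) \<le> cmod c * opnorm M"
proof (rule opnorm_leI)
  show "0 \<le> cmod c * opnorm M" by (simp add: opnorm_ge0)
  fix x
  have "norm (cmat_scale c M *v x) = cmod c * norm (M *v x)" by (simp add: cmat_scale_mv norm_smult_vec)
  also have "\<dots> \<le> cmod c * (opnorm M * norm x)" by (rule mult_left_mono[OF opnorm_mv]) simp
  finally show "norm (cmat_scale c M *v x) \<le> cmod c * opnorm M * norm x" by simp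
qed

lemma norm_axis_c1 [simp]: "norm (axis m (1::complex)) = 1"
  by (simp add: inner_axis' norm_eq_1)

lemma entry_le_opnorm: "cmod ((M::complex^'n^'n) $ i $ j) \<le> opnorm M"
proof -
  have "M $ i $ j = (M *v axis j 1) $ i"
    by (simp add: matrix_vector_mult_def axis_def if_distrib cong: if_cong)
  moreover have "norm ((M *v axis j 1) $ i) \<le> norm (M *v axis j 1)" by (rule Finite_Cartesian_Product.norm_nth_le)
  ultimately have "cmod (M $ i $ j) \<le> norm (M *v axis j 1)" by simp
  also have "\<dots> \<le> opnorm M * norm (axis j (1::complex))" by (rule opnorm_mv)
  finally show ?thesis by simp
qed

lemma norm_vec_le_sum: "norm (x::'a::real_normed_vector^'n) \<le> (\<Sum>i\<in>UNIV. norm (x $ i))"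
  unfolding norm_vec_def by (rule L2_set_le_sum) simp

lemma norm_le_opnorm: "norm (M::complex^'n^'n) \<le> real (CARD('n) * CARD('n)) * opnorm M"
proof -
  have "norm M \<le> (\<Sum>i\<in>UNIV. norm (M $ i))" by (rule norm_vec_le_sum)
  also have "\<dots> \<le> (\<Sum>i\<in>(UNIV::'n set). \<Sum>j\<in>(UNIV::'n set). cmod (M $ i $ j))"
    by (intro sum_mono) (simp add: norm_vec_le_sum)
  also have "\<dots> \<le> (\<Sum>i\<in>(UNIV::'n set). \<Sum>j\<in>(UNIV::'n set). opnorm M)"
    by (intro sum_mono entry_le_opnorm)
  finally show ?thesis by simp
qed


lemma norm_sums_le:
  fixes f :: "nat \<Rightarrow> 'a::banach"
  assumes "f sums s" "g sums G" "\<And>k. norm (f k) \<le> g k"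
  shows "norm s \<le> G"
proof -
  have sg: "summable g" using assms(2) by (simp add: sums_summable)
  have sn: "summable (\<lambda>k. norm (f k))"
    by (rule summable_comparison_test'[OF sg]) (use assms(3) in auto)
  have "norm s = norm (suminf f)" using sums_unique[OF assms(1)] by metis
  also have "\<dots> \<le> (\<Sum>k. norm (f k))" by (rule summable_norm[OF sn])
  also have "\<dots> \<le> suminf g" by (rule suminf_le[OF assms(3) sn sg])
  also have "\<dots> = G" using sums_unique[OF assms(2)] by metis
  finally show ?thesis .
qed

lemma matpow_opnorm: "opnorm (matpow (X::complex^'n^'n) k) \<le> opnorm X ^ k"
proof (induction k)
  case 0 then show ?case using opnorm_id by simp
next
  case (Suc k)
  have "opnorm (matpow X (Suc k)) \<le> opnorm X * opnorm (matpow X k)"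
    using opnorm_mult by simp
  also have "\<dots> \<le> opnorm X * opnorm X ^ k" by (rule mult_left_mono[OF Suc opnorm_ge0])
  finally show ?case by simp
qed

lemma mexp_summable: "summable (\<lambda>k. scaleR (inverse (fact k)) (matpow (X::complex^'n^'n) k))"
proof (rule summable_comparison_test')
  show "summable (\<lambda>k. real (CARD('n) * CARD('n)) * (inverse (fact k) * opnorm X ^ k))"
    by (intro summable_mult summable_exp)
  fix k :: nat
  have "norm (scaleR (inverse (fact k)) (matpow X k)) = inverse (fact k) * norm (matpow X k)" by simp
  also have "\<dots> \<le> inverse (fact k) * (real (CARD('n) * CARD('n)) * opnorm (matpow X k))"
    by (intro mult_left_mono norm_le_opnorm) simp
  also have "\<dots> \<le> inverse (fact k) * (real (CARD('n) * CARD('n)) * opnorm X ^ k)"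
    by (intro mult_left_mono matpow_opnorm) simp_all
  finally show "norm (scaleR (inverse (fact k)) (matpow X k)) \<le> real (CARD('n) * CARD('n)) * (inverse (fact k) * opnorm X ^ k)"
    by (simp add: algebra_simps)
qed

lemma mexp_sums: "(\<lambda>k. scaleR (inverse (fact k)) (matpow (X::complex^'n^'n) k)) sums mexp X"
  unfolding mexp_def using mexp_summable by (rule summable_sums)

lemma bl_applyvec: "bounded_linear (\<lambda>M::complex^'n^'n. M *v x)"
proof -
  have "linear (\<lambda>M::complex^'n^'n. M *v x)"
    by (rule linearI) (simp_all add: matrix_vector_mult_add_rdistrib vec_eq_iff matrix_vector_mult_def scaleR_sum_right sum.distrib distrib_right)
  then show ?thesis using linear_conv_bounded_linear by blast
qed

lemma mexp_mv_sums: "(\<lambda>k. scaleR (inverse (fact k)) (matpow (X::complex^'n^'n) k *v x)) sums (mexp X *v x)"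
proof -
  have "(\<lambda>k. (scaleR (inverse (fact k)) (matpow X k)) *v x) sums (mexp X *v x)"
    by (rule bounded_linear.sums[OF bl_applyvec mexp_sums])
  moreover have "\<And>k. (scaleR (inverse (fact k)) (matpow X k)) *v x = scaleR (inverse (fact k)) (matpow X k *v x)"
    by (simp add: vec_eq_iff matrix_vector_mult_def scaleR_sum_right)
  ultimately show ?thesis by simp
qed

lemma mexp_opnorm: "opnorm (mexp (X::complex^'n^'n)) \<le> exp (opnorm X)"
proof (rule opnorm_leI)
  show "0 \<le> exp (opnorm X)" by simp
  fix x :: "complex^'n"
  have g: "(\<lambda>k. (opnorm X ^ k /\<^sub>R fact k) * norm x) sums (exp (opnorm X) * norm x)"
    by (rule sums_mult2[OF exp_converges])
  show "norm (mexp X *v x) \<le> exp (opnorm X) * norm x"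
  proof (rule norm_sums_le[OF mexp_mv_sums g])
    fix k
    have "norm (scaleR (inverse (fact k)) (matpow X k *v x)) = inverse (fact k) * norm (matpow X k *v x)" by simp
    also have "\<dots> \<le> inverse (fact k) * (opnorm (matpow X k) * norm x)"
      by (intro mult_left_mono opnorm_mv) simp
    also have "\<dots> \<le> inverse (fact k) * (opnorm X ^ k * norm x)"
      by (intro mult_left_mono mult_right_mono matpow_opnorm) simp_all
    finally show "norm (scaleR (inverse (fact k)) (matpow X k *v x)) \<le> (opnorm X ^ k /\<^sub>R fact k) * norm x"
      by (simp add: divide_inverse_commute)
  qed
qed

lemma mexp_minus_opnorm: "opnorm (mexp (X::complex^'n^'n) - mat 1) \<le> exp (opnorm X) - 1"
proof (rule opnorm_leI)
  show "0 \<le> exp (opnorm X) - 1" using opnorm_ge0[of X] by simp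
  fix x :: "complex^'n"
  have g0: "(\<lambda>k. (opnorm X ^ k /\<^sub>R fact k) * norm x) sums (exp (opnorm X) * norm x)"
    by (rule sums_mult2[OF exp_converges])
  have g: "(\<lambda>k. (opnorm X ^ Suc k /\<^sub>R fact (Suc k)) * norm x) sums ((exp (opnorm X) - 1) * norm x)"
    using g0 by (subst sums_Suc_iff) (simp add: algebra_simps)
  have f: "(\<lambda>k. scaleR (inverse (fact (Suc k))) (matpow X (Suc k) *v x)) sums (mexp X *v x - x)"
    using mexp_mv_sums[of X x] by (subst sums_Suc_iff) simp
  have "norm (mexp X *v x - x) \<le> (exp (opnorm X) - 1) * norm x"
  proof (rule norm_sums_le[OF f g])
    fix k
    have "norm (scaleR (inverse (fact (Suc k))) (matpow X (Suc k) *v x)) = inverse (fact (Suc k)) * norm (matpow X (Suc k) *v x)" by simp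
    also have "\<dots> \<le> inverse (fact (Suc k)) * (opnorm (matpow X (Suc k)) * norm x)"
      by (intro mult_left_mono opnorm_mv) simp
    also have "\<dots> \<le> inverse (fact (Suc k)) * (opnorm X ^ Suc k * norm x)"
      by (intro mult_left_mono mult_right_mono matpow_opnorm) simp_all
    finally show "norm (scaleR (inverse (fact (Suc k))) (matpow X (Suc k) *v x)) \<le> (opnorm X ^ Suc k /\<^sub>R fact (Suc k)) * norm x"
      by (simp add: divide_inverse_commute)
  qed
  then show "norm ((mexp X - mat 1) *v x) \<le> (exp (opnorm X) - 1) * norm x"
    by (simp add: matrix_vector_mult_diff_rdistrib)
qed


definition cinner :: "complex^'n \<Rightarrow> complex^'n \<Rightarrow> complex" where
  "cinner x y = (\<Sum>i\<in>UNIV. x$i * cnj (y$i))"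

lemma cinner_adj: "cinner ((M::complex^'n^'n) *v x) y = cinner x (cmat_adj M *v y)"
proof -
  have "cinner (M *v x) y = (\<Sum>i\<in>UNIV. \<Sum>j\<in>UNIV. M$i$j * x$j * cnj(y$i))"
    by (simp add: cinner_def matrix_vector_mult_def sum_distrib_right)
  also have "\<dots> = (\<Sum>j\<in>UNIV. \<Sum>i\<in>UNIV. M$i$j * x$j * cnj(y$i))" by (rule sum.swap)
  also have "\<dots> = cinner x (cmat_adj M *v y)"
    by (simp add: cinner_def cmat_adj_def matrix_vector_mult_def sum_distrib_left mult_ac)
  finally show ?thesis .
qed

lemma herm_adj: "hermitian A \<Longrightarrow> cmat_adj A = A"
  unfolding hermitian_def cmat_adj_def vec_eq_iff by (metis vec_lambda_beta)

lemma cinner_add_left: "cinner (x + y) z = cinner x z + cinner y z"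
  by (simp add: cinner_def distrib_right sum.distrib)
lemma cinner_add_right: "cinner z (x + y) = cinner z x + cinner z y"
  by (simp add: cinner_def distrib_left sum.distrib)
lemma cinner_diff_left: "cinner (x - y) z = cinner x z - cinner y z"
  by (simp add: cinner_def left_diff_distrib sum_subtractf)
lemma cinner_diff_right: "cinner z (x - y) = cinner z x - cinner z y"
  by (simp add: cinner_def right_diff_distrib sum_subtractf)
lemma cinner_smult_left: "cinner (c *s x) y = c * cinner x y"
  by (simp add: cinner_def sum_distrib_left mult.assoc)
lemma cinner_smult_right: "cinner x (c *s y) = cnj c * cinner x y"
  by (simp add: cinner_def sum_distrib_left mult_ac)
lemma cinner_scaleR_left: "cinner (r *\<^sub>R x) y = of_real r * cinner x y"
  by (simp add: cinner_def sum_distrib_left mult.assoc) (simp add: scaleR_conv_of_real)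
lemma cinner_zero_left [simp]: "cinner 0 y = 0"
  by (simp add: cinner_def)
lemma cinner_zero_right [simp]: "cinner x 0 = 0"
  by (simp add: cinner_def)
lemma cinner_commute: "cinner y x = cnj (cinner x y)"
  by (simp add: cinner_def mult.commute)
lemma re_cinner: "Re (cinner x y) = x \<bullet> y"
  by (simp add: cinner_def inner_vec_def inner_complex_def)
lemma cinner_self: "cinner x x = complex_of_real ((norm x)^2)"
proof -
  have "cinner x x = (\<Sum>i\<in>UNIV. complex_of_real ((cmod (x$i))^2))"
    unfolding cinner_def by (intro sum.cong refl) (rule complex_norm_square[symmetric])
  also have "\<dots> = complex_of_real (\<Sum>i\<in>UNIV. (cmod (x$i))^2)" by simp
  also have "(\<Sum>i\<in>UNIV. (cmod (x$i))^2) = (norm x)^2"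
    by (simp add: power2_norm_eq_inner inner_vec_def)
  finally show ?thesis .
qed
lemma cinner_self_eq0: "cinner x x = 0 \<longleftrightarrow> x = 0"
  by (simp add: cinner_self)

lemma smult_smult: "a *s (b *s (x::complex^'n)) = (a * b) *s x"
  by (simp add: vec_eq_iff mult.assoc)

lemma mv_smult: "(M::complex^'n^'n) *v (c *s x) = c *s (M *v x)"
  by (simp add: vec_eq_iff matrix_vector_mult_def sum_distrib_left mult_ac)

lemma mat_eq_mv: "(\<And>x. (M::complex^'n^'n) *v x = P *v x) \<Longrightarrow> M = P"
proof -
  assume h: "\<And>x. M *v x = P *v x"
  have e: "\<And>Q::complex^'n^'n. \<And>i j. Q $ i $ j = (Q *v axis j 1) $ i"
    by (simp add: matrix_vector_mult_def axis_def if_distrib cong: if_cong)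
  show "M = P" by (simp add: vec_eq_iff e h)
qed

lemma mat_eq_cinner: "(\<And>x y. cinner ((M::complex^'n^'n) *v x) y = cinner (P *v x) y) \<Longrightarrow> M = P"
proof (rule mat_eq_mv)
  fix x
  assume h: "\<And>x y. cinner (M *v x) y = cinner (P *v x) y"
  have "cinner (M *v x - P *v x) (M *v x - P *v x) = 0"
    by (simp add: cinner_diff_left h)
  then show "M *v x = P *v x" by (simp add: cinner_self_eq0)
qed

lemma adj_adj: "cmat_adj (cmat_adj M) = (M::complex^'n^'n)"
  by (simp add: cmat_adj_def vec_eq_iff)

lemma adj_mult: "cmat_adj ((M::complex^'n^'n) ** P) = cmat_adj P ** cmat_adj M"
  by (simp add: cmat_adj_def matrix_matrix_mult_def vec_eq_iff mult.commute)


lemma quad_zero: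
  fixes a b :: real
  assumes h: "\<And>t. 2*t*a + t^2*b \<le> 0"
  shows "a = 0"
proof -
  define c where "c = \<bar>b\<bar> + 1"
  have c: "c > 0" "2*c + b > 0" unfolding c_def by auto
  have h1: "2*(a/c)*a + (a/c)^2*b \<le> 0" by (rule h)
  have e: "2*(a/c)*a + (a/c)^2*b = a^2 * (2*c + b) / c^2"
    using c(1) by (simp add: field_simps power2_eq_square)
  have "a^2 * (2*c + b) / c^2 \<le> 0" using h1 e by simp
  then have "a^2 * (2*c + b) \<le> 0" using c(1) by (simp add: divide_le_0_iff)
  then have "a^2 \<le> 0" using c(2) by (simp add: mult_le_0_iff)
  then show ?thesis by simp
qed

lemma mv_scaleR: "(M::complex^'n^'n) *v (r *\<^sub>R x) = r *\<^sub>R (M *v x)"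
  by (simp add: vec_eq_iff matrix_vector_mult_def scaleR_sum_right)

locale herm =
  fixes A :: "complex^'n^'n"
  assumes herm: "hermitian A"
begin

definition Vs :: "(complex^'n) set" where "Vs = {v. \<exists>\<mu>. A *v v = \<mu> *s v}"

lemma Aadj: "cinner (A *v x) y = cinner x (A *v y)"
  using cinner_adj[of A x y] herm_adj[OF herm] by simp

lemma eigval_real: assumes "A *v v = \<mu> *s v" "v \<noteq> 0" shows "cnj \<mu> = \<mu>"
proof -
  have "\<mu> * cinner v v = cinner (A *v v) v" by (simp add: assms cinner_smult_left)
  also have "\<dots> = cinner v (A *v v)" by (rule Aadj)
  also have "\<dots> = cnj \<mu> * cinner v v" by (simp add: assms cinner_smult_right)
  finally show ?thesis using assms(2) by (simp add: cinner_self_eq0)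
qed

lemma eig_orth:
  assumes "A *v v = \<mu> *s v" "A *v w = \<nu> *s w" "\<mu> \<noteq> \<nu>"
  shows "cinner v w = 0"
proof (cases "w = 0")
  case False
  have r: "cnj \<nu> = \<nu>" by (rule eigval_real[OF assms(2) False])
  have "\<mu> * cinner v w = cinner (A *v v) w" by (simp add: assms cinner_smult_left)
  also have "\<dots> = cinner v (A *v w)" by (rule Aadj)
  also have "\<dots> = \<nu> * cinner v w" by (simp add: assms cinner_smult_right r)
  finally have "(\<mu> - \<nu>) * cinner v w = 0" by (simp add: algebra_simps)
  then show ?thesis using assms(3) by simp
qed simp

lemma Vs_smult: "v \<in> Vs \<Longrightarrow> c *s v \<in> Vs"
  unfolding Vs_def by (auto simp: mv_smult smult_smult mult.commute)

lemma cinner_eq0_from_real: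
  assumes "\<And>c. Re (cinner x (c *s v)) = 0"
  shows "cinner x v = 0"
proof -
  have "Re (cinner x v) = 0" using assms[of 1] by simp
  moreover have "Re (cinner x (\<i> *s v)) = 0" by (rule assms)
  then have "Im (cinner x v) = 0" by (simp add: cinner_smult_right)
  ultimately show ?thesis by (simp add: complex_eq_iff)
qed

lemma Vs_span: "span Vs = UNIV"
proof (rule ccontr)
  assume ns: "span Vs \<noteq> UNIV"
  have dl: "dim Vs < DIM(complex^'n)"
    using dim_eq_full[of Vs] dim_subset_UNIV[of Vs] ns by linarith
  obtain x :: "complex^'n" where x0: "x \<noteq> 0" and xo: "\<And>y. y \<in> span Vs \<Longrightarrow> orthogonal x y"
    using orthogonal_to_subspace_exists[OF dl] by blast
  define W where "W = {w::complex^'n. \<forall>v\<in>Vs. cinner w v = 0}"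
  have xW: "x \<in> W"
    unfolding W_def mem_Collect_eq
  proof (intro ballI cinner_eq0_from_real)
    fix v c assume "v \<in> Vs"
    then have "c *s v \<in> span Vs" using Vs_smult span_base by blast
    then show "Re (cinner x (c *s v)) = 0" using xo by (simp add: re_cinner orthogonal_def)
  qed
  have W_add: "u + w \<in> W" if "u \<in> W" "w \<in> W" for u w
    using that by (simp add: W_def cinner_add_left)
  have W_smult: "c *s w \<in> W" if "w \<in> W" for w c
    using that by (simp add: W_def cinner_smult_left)
  have W_scaleR: "c *\<^sub>R w \<in> W" if "w \<in> W" for w c
    using that by (simp add: W_def cinner_scaleR_left)
  have W_A: "A *v w \<in> W" if "w \<in> W" for w
    unfolding W_def mem_Collect_eq
  proof (intro ballI)
    fix v assume "v \<in> Vs"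
    then obtain \<mu> where "A *v v = \<mu> *s v" unfolding Vs_def by auto
    then have "cinner (A *v w) v = cnj \<mu> * cinner w v" by (simp add: Aadj cinner_smult_right)
    then show "cinner (A *v w) v = 0" using that \<open>v \<in> Vs\<close> by (simp add: W_def)
  qed
  have subW: "subspace W"
    unfolding subspace_def using W_add W_scaleR by (simp add: W_def)
  define K where "K = W \<inter> sphere 0 1"
  have cK: "compact K" unfolding K_def
    by (intro closed_Int_compact closed_subspace subW compact_sphere)
  have x1: "(1 / norm x) *\<^sub>R x \<in> K" using x0 xW W_scaleR by (simp add: K_def)
  then have neK: "K \<noteq> {}" by auto
  define q where "q = (\<lambda>w. (A *v w) \<bullet> w)"
  have cq: "continuous_on K q" unfolding q_def
    by (intro continuous_intros linear_continuous_on bl_mv)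
  obtain x0 where x0K: "x0 \<in> K" and mx: "\<And>y. y \<in> K \<Longrightarrow> q y \<le> q x0"
    using continuous_attains_sup[OF cK neK cq] by blast
  have x0W: "x0 \<in> W" and nx0: "norm x0 = 1" using x0K by (auto simp: K_def)
  define lam where "lam = q x0"
  have qscale: "q (r *\<^sub>R w) = r^2 * q w" for r w
    by (simp add: q_def mv_scaleR power2_eq_square)
  have ray: "q z \<le> lam * (norm z)^2" if "z \<in> W" for z
  proof (cases "z = 0")
    case True then show ?thesis by (simp add: q_def)
  next
    case False
    have "(1 / norm z) *\<^sub>R z \<in> K" using False that W_scaleR by (simp add: K_def)
    then have "q ((1 / norm z) *\<^sub>R z) \<le> lam" using mx lam_def by simp
    then have "(1 / norm z)^2 * q z \<le> lam" by (simp add: qscale)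
    then show ?thesis using False by (simp add: field_simps power2_eq_square)
  qed
  have sym: "(A *v y) \<bullet> x0 = (A *v x0) \<bullet> y" for y
  proof -
    have "(A *v y) \<bullet> x0 = Re (cinner (A *v y) x0)" by (simp add: re_cinner)
    also have "\<dots> = Re (cinner y (A *v x0))" by (simp add: Aadj)
    also have "\<dots> = Re (cinner (A *v x0) y)" by (subst cinner_commute) simp
    finally show ?thesis by (simp add: re_cinner)
  qed
  have real_orth: "(A *v x0) \<bullet> y = 0" if yW: "y \<in> W" and yo: "cinner y x0 = 0" for y
  proof (rule quad_zero)
    fix t :: real
    have "x0 + t *\<^sub>R y \<in> W" using x0W yW W_add W_scaleR by blast
    then have "q (x0 + t *\<^sub>R y) \<le> lam * (norm (x0 + t *\<^sub>R y))^2" by (rule ray)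
    moreover have "q (x0 + t *\<^sub>R y) = lam + 2*t*((A *v x0) \<bullet> y) + t^2 * q y"
    proof -
      have "q (x0 + t *\<^sub>R y) = (A *v x0 + t *\<^sub>R (A *v y)) \<bullet> (x0 + t *\<^sub>R y)"
        by (simp add: q_def matrix_vector_right_distrib mv_scaleR)
      also have "\<dots> = (A *v x0) \<bullet> x0 + t * ((A *v x0) \<bullet> y) + t * ((A *v y) \<bullet> x0) + (t * t) * ((A *v y) \<bullet> y)"
        by (simp add: inner_add_left inner_add_right add.assoc distrib_left mult.assoc)
      also have "\<dots> = lam + 2*t*((A *v x0) \<bullet> y) + t^2 * q y"
        by (simp add: lam_def q_def sym[of y] power2_eq_square)
      finally show ?thesis .
    qed
    moreover have "x0 \<bullet> y = 0"
    proof -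
      have "y \<bullet> x0 = 0" using yo re_cinner[of y x0] by simp
      then show ?thesis by (simp add: inner_commute)
    qed
    then have "(norm (x0 + t *\<^sub>R y))^2 = 1 + t^2 * (norm y)^2"
    proof -
      have xx: "x0 \<bullet> x0 = 1" using nx0 power2_norm_eq_inner[of x0] by simp
      have yy: "y \<bullet> y = (norm y)^2" by (simp add: power2_norm_eq_inner)
      have "(norm (x0 + t *\<^sub>R y))^2 = (x0 + t *\<^sub>R y) \<bullet> (x0 + t *\<^sub>R y)" by (rule power2_norm_eq_inner)
      also have "\<dots> = x0 \<bullet> x0 + t * (x0 \<bullet> y) + t * (y \<bullet> x0) + (t * t) * (y \<bullet> y)"
        by (simp add: inner_add_left inner_add_right add.assoc distrib_left mult.assoc)
      also have "\<dots> = 1 + t^2 * (norm y)^2"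
        using \<open>x0 \<bullet> y = 0\<close> xx yy by (simp add: inner_commute[of y x0] power2_eq_square)
      finally show ?thesis .
    qed
    ultimately have "lam + 2*t*((A *v x0) \<bullet> y) + t^2 * q y \<le> lam * (1 + t^2 * (norm y)^2)" by simp
    then show "2*t*((A *v x0) \<bullet> y) + t^2 * (q y - lam * (norm y)^2) \<le> 0"
      by (simp add: algebra_simps)
  qed
  have c_orth: "cinner (A *v x0) y = 0" if yW: "y \<in> W" and yo: "cinner y x0 = 0" for y
  proof (rule cinner_eq0_from_real)
    fix c
    have "c *s y \<in> W" using W_smult yW by blast
    moreover have "cinner (c *s y) x0 = 0" using yo by (simp add: cinner_smult_left)
    ultimately show "Re (cinner (A *v x0) (c *s y)) = 0"
      using real_orth by (simp add: re_cinner)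
  qed
  define c where "c = cinner (A *v x0) x0"
  define u where "u = A *v x0 - c *s x0"
  have x0x0: "cinner x0 x0 = 1" using nx0 by (simp add: cinner_self)
  have "u = A *v x0 + (-c) *s x0" by (simp add: u_def vec_eq_iff)
  then have uW: "u \<in> W" using W_add W_smult W_A x0W by metis
  have ux0: "cinner u x0 = 0"
    by (simp add: u_def cinner_diff_left cinner_smult_left x0x0 c_def)
  have Au: "cinner (A *v x0) u = 0" by (rule c_orth[OF uW ux0])
  have x0u: "cinner x0 u = 0" using ux0 cinner_commute[of x0 u] by simp
  have "cinner u u = cinner (A *v x0) u - c * cinner x0 u"
    by (simp add: u_def cinner_diff_left cinner_smult_left)
  then have "cinner u u = 0" using Au x0u by simp
  then have "u = 0" by (simp add: cinner_self_eq0)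
  then have "A *v x0 = c *s x0" by (simp add: u_def)
  then have "x0 \<in> Vs" by (auto simp: Vs_def)
  then have "cinner x0 x0 = 0" using x0W by (simp add: W_def)
  then show False using x0x0 by simp
qed

end


lemma sum_mv: "(\<Sum>i\<in>S. (f i::complex^'n^'n)) *v x = (\<Sum>i\<in>S. f i *v x)"
proof (induction S rule: infinite_finite_induct)
  case (infinite S) then show ?case by simp
next
  case empty then show ?case by (simp add: vec_eq_iff matrix_vector_mult_def)
next
  case (insert a S) then show ?case by (simp add: matrix_vector_mult_add_rdistrib)
qed

lemma cinner_sum_right: "cinner x (\<Sum>i\<in>S. f i) = (\<Sum>i\<in>S. cinner x (f i))"
proof (induction S rule: infinite_finite_induct)
  case (insert a S) then show ?case by (simp add: cinner_add_right)
qed simp_all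

lemma prod_list_ones: "(\<And>x. x \<in> set ls \<Longrightarrow> f x = 1) \<Longrightarrow> prod_list (map f ls) = (1::complex)"
  by (induction ls) auto

context herm
begin

lemma spec_iff: "\<mu> \<in> spec A \<longleftrightarrow> (\<exists>v. v \<noteq> 0 \<and> A *v v = \<mu> *s v)"
  by (simp add: spec_def)

definition ev :: "complex \<Rightarrow> complex^'n" where
  "ev \<mu> = (SOME v. v \<noteq> 0 \<and> A *v v = \<mu> *s v)"

lemma ev: "\<mu> \<in> spec A \<Longrightarrow> ev \<mu> \<noteq> 0 \<and> A *v ev \<mu> = \<mu> *s ev \<mu>"
  unfolding ev_def spec_iff by (rule someI_ex)

lemma spec_finite_card: "finite (spec A) \<and> card (spec A) \<le> CARD('n)"
proof -
  define D where "D = spec A \<times> {1, \<i>}"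
  define g where "g = (\<lambda>(\<mu>, c). c *s ev \<mu>)"
  have gi: "g (\<mu>, c) \<bullet> g (\<nu>, d) = Re (c * cnj d * cinner (ev \<mu>) (ev \<nu>))" for \<mu> \<nu> c d
    by (simp add: g_def re_cinner[symmetric] cinner_smult_left cinner_smult_right mult_ac)
  have orth: "g a \<bullet> g b = 0" if "a \<in> D" "b \<in> D" "a \<noteq> b" for a b
  proof -
    obtain \<mu> c \<nu> d where ab: "a = (\<mu>, c)" "b = (\<nu>, d)" by (cases a, cases b) auto
    have \<mu>: "\<mu> \<in> spec A" and \<nu>: "\<nu> \<in> spec A" and c: "c \<in> {1, \<i>}" and d: "d \<in> {1, \<i>}"
      using that ab by (auto simp: D_def)
    show ?thesis
    proof (cases "\<mu> = \<nu>")
      case True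
      then have cd: "c \<noteq> d" using that ab by auto
      have "cinner (ev \<mu>) (ev \<mu>) = complex_of_real ((norm (ev \<mu>))^2)" by (rule cinner_self)
      then show ?thesis using True cd c d by (auto simp: ab gi)
    next
      case False
      then have "cinner (ev \<mu>) (ev \<nu>) = 0" using eig_orth ev[OF \<mu>] ev[OF \<nu>] by blast
      then show ?thesis by (simp add: ab gi)
    qed
  qed
  have nz: "g a \<noteq> 0" if "a \<in> D" for a
  proof -
    obtain \<mu> c where ab: "a = (\<mu>, c)" by (cases a) auto
    have "\<mu> \<in> spec A" "c \<noteq> 0" using that ab by (auto simp: D_def)
    then show ?thesis using ev[of \<mu>] by (simp add: ab g_def vec_eq_iff)
  qed
  have inj: "inj_on g D"
  proof (rule inj_onI, rule ccontr)
    fix a b assume "a \<in> D" "b \<in> D" "g a = g b" "a \<noteq> b"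
    then have "g a \<bullet> g a = 0" using orth by metis
    then show False using nz \<open>a \<in> D\<close> by simp
  qed
  have po: "pairwise orthogonal (g ` D)"
    unfolding pairwise_def orthogonal_def using orth by auto
  have "independent (g ` D)"
    by (rule pairwise_orthogonal_independent[OF po]) (use nz in auto)
  then have fin: "finite (g ` D)" and cd: "card (g ` D) \<le> DIM(complex^'n)"
    using independent_bound[of "g ` D"] by auto
  have finD: "finite D" using finite_imageD[OF fin inj] .
  then have fs: "finite (spec A)" unfolding D_def
    by (metis finite_cartesian_productD1 insert_not_empty)
  have "card D = card (spec A) * 2" unfolding D_def
    by (simp add: card_cartesian_product)
  moreover have "card D = card (g ` D)" using card_image[OF inj] by simp
  ultimately have "card (spec A) * 2 \<le> CARD('n) * 2" using cd by simp
  then show ?thesis using fs by simp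
qed

lemma spec_finite: "finite (spec A)" using spec_finite_card by simp
lemma spec_card: "card (spec A) \<le> CARD('n)" using spec_finite_card by simp

lemma eigval_in_spec: "A *v v = \<alpha> *s v \<Longrightarrow> v \<noteq> 0 \<Longrightarrow> \<alpha> \<in> spec A"
  by (auto simp: spec_def)

lemma mat_eq_on_eig:
  assumes "\<And>v \<alpha>. A *v v = \<alpha> *s v \<Longrightarrow> v \<noteq> 0 \<Longrightarrow> \<alpha> \<in> spec A \<Longrightarrow> (M::complex^'n^'n) *v v = P *v v"
  shows "M = P"
proof (rule mat_eq_mv)
  fix x :: "complex^'n"
  have "x \<in> span Vs" using Vs_span by simp
  moreover have "\<And>v. v \<in> Vs \<Longrightarrow> M *v v = P *v v"
  proof -
    fix v assume "v \<in> Vs"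
    then obtain \<alpha> where "A *v v = \<alpha> *s v" by (auto simp: Vs_def)
    then show "M *v v = P *v v"
      by (cases "v = 0") (auto intro: assms eigval_in_spec)
  qed
  ultimately show "M *v x = P *v x"
    using linear_eq_on_span[OF matrix_vector_mul_linear matrix_vector_mul_linear] by blast
qed

definition pl :: "complex \<Rightarrow> complex list" where
  "pl \<mu> = (SOME ls. set ls = spec A - {\<mu>})"

lemma pl: "set (pl \<mu>) = spec A - {\<mu>}"
  unfolding pl_def by (rule someI_ex) (use finite_list spec_finite in blast)

definition Pf :: "complex \<Rightarrow> complex list \<Rightarrow> complex^'n^'n" where
  "Pf \<mu> ls = foldr (\<lambda>\<nu> M. cmat_scale (1/(\<mu>-\<nu>)) (A - cmat_scale \<nu> (mat 1)) ** M) ls (mat 1)"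

definition E :: "complex \<Rightarrow> complex^'n^'n" where
  "E \<mu> = Pf \<mu> (pl \<mu>)"

lemma Pf_eig: "A *v v = \<alpha> *s v \<Longrightarrow> Pf \<mu> ls *v v = prod_list (map (\<lambda>\<nu>. (\<alpha>-\<nu>)/(\<mu>-\<nu>)) ls) *s v"
proof (induction ls)
  case Nil then show ?case by (simp add: Pf_def vec_eq_iff)
next
  case (Cons \<nu> ls)
  have "Pf \<mu> (\<nu> # ls) *v v = cmat_scale (1/(\<mu>-\<nu>)) (A - cmat_scale \<nu> (mat 1)) *v (Pf \<mu> ls *v v)"
    by (simp add: Pf_def matrix_vector_mul_assoc)
  also have "\<dots> = prod_list (map (\<lambda>\<nu>. (\<alpha>-\<nu>)/(\<mu>-\<nu>)) ls) *s (cmat_scale (1/(\<mu>-\<nu>)) (A - cmat_scale \<nu> (mat 1)) *v v)"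
    using Cons by (simp add: mv_smult)
  also have "cmat_scale (1/(\<mu>-\<nu>)) (A - cmat_scale \<nu> (mat 1)) *v v = ((\<alpha>-\<nu>)/(\<mu>-\<nu>)) *s v"
    using Cons.prems by (simp add: cmat_scale_mv matrix_vector_mult_diff_rdistrib vec_eq_iff diff_divide_distrib)
  finally show ?case by (simp add: smult_smult mult.commute)
qed

lemma E_eig:
  assumes "A *v v = \<alpha> *s v" "\<alpha> \<in> spec A"
  shows "E \<mu> *v v = (if \<alpha> = \<mu> then v else 0)"
proof (cases "\<alpha> = \<mu>")
  case True
  have "prod_list (map (\<lambda>\<nu>. (\<alpha>-\<nu>)/(\<mu>-\<nu>)) (pl \<mu>)) = 1"
    by (rule prod_list_ones) (use True pl in auto)
  then show ?thesis using Pf_eig[OF assms(1)] True by (simp add: E_def vec_eq_iff)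
next
  case False
  have "prod_list (map (\<lambda>\<nu>. (\<alpha>-\<nu>)/(\<mu>-\<nu>)) (pl \<mu>)) = 0"
    using False assms(2) pl[of \<mu>] by (auto simp: prod_list_zero_iff)
  then show ?thesis using Pf_eig[OF assms(1)] False by (simp add: E_def vec_eq_iff)
qed

end


context herm
begin

lemma E_idem: "\<mu> \<in> spec A \<Longrightarrow> E \<mu> ** E \<mu> = E \<mu>"
  by (rule mat_eq_on_eig) (simp add: matrix_vector_mul_assoc[symmetric] E_eig)

lemma A_E: "A ** E \<mu> = cmat_scale \<mu> (E \<mu>)"
  by (rule mat_eq_on_eig) (simp add: matrix_vector_mul_assoc[symmetric] E_eig cmat_scale_mv)

lemma zero_mv: "(0::complex^'n^'n) *v x = 0"
  by (simp add: vec_eq_iff matrix_vector_mult_def)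

lemma E_orth: "\<mu> \<noteq> \<nu> \<Longrightarrow> E \<mu> ** E \<nu> = 0"
  by (rule mat_eq_on_eig) (auto simp: matrix_vector_mul_assoc[symmetric] E_eig zero_mv)

lemma E_sum: "(\<Sum>\<mu>\<in>spec A. E \<mu>) = mat 1"
  by (rule mat_eq_on_eig) (simp add: sum_mv E_eig spec_finite)

lemma E_range: "A *v (E \<mu> *v x) = \<mu> *s (E \<mu> *v x)"
  by (simp add: matrix_vector_mul_assoc A_E cmat_scale_mv)

lemma E_decomp: "(\<Sum>\<nu>\<in>spec A. E \<nu> *v y) = y"
  using E_sum by (simp add: sum_mv[symmetric])

lemma proj_self: assumes "\<mu> \<in> spec A" shows "cinner (E \<mu> *v x) y = cinner (E \<mu> *v x) (E \<mu> *v y)"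
proof -
  have "cinner (E \<mu> *v x) y = (\<Sum>\<nu>\<in>spec A. cinner (E \<mu> *v x) (E \<nu> *v y))"
    by (subst E_decomp[symmetric, of y]) (simp add: cinner_sum_right)
  also have "\<dots> = cinner (E \<mu> *v x) (E \<mu> *v y) + (\<Sum>\<nu>\<in>spec A - {\<mu>}. cinner (E \<mu> *v x) (E \<nu> *v y))"
    using assms spec_finite by (simp add: sum.remove)
  also have "(\<Sum>\<nu>\<in>spec A - {\<mu>}. cinner (E \<mu> *v x) (E \<nu> *v y)) = 0"
  proof (rule sum.neutral, rule ballI)
    fix \<nu> assume "\<nu> \<in> spec A - {\<mu>}"
    then have "\<mu> \<noteq> \<nu>" by auto
    then show "cinner (E \<mu> *v x) (E \<nu> *v y) = 0" by (rule eig_orth[OF E_range E_range])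
  qed
  finally show ?thesis by simp
qed

lemma E_adj: assumes "\<mu> \<in> spec A" shows "cmat_adj (E \<mu>) = E \<mu>"
proof (rule mat_eq_cinner)
  fix x y
  have "cinner (cmat_adj (E \<mu>) *v x) y = cinner x (E \<mu> *v y)"
    by (simp add: cinner_adj adj_adj)
  also have "\<dots> = cnj (cinner (E \<mu> *v y) x)" by (rule cinner_commute)
  also have "\<dots> = cnj (cinner (E \<mu> *v y) (E \<mu> *v x))" by (simp only: proj_self[OF assms, of y x])
  also have "\<dots> = cinner (E \<mu> *v x) (E \<mu> *v y)" by (simp add: cinner_commute[of "E \<mu> *v x"])
  also have "\<dots> = cinner (E \<mu> *v x) y" by (rule proj_self[OF assms, symmetric])
  finally show "cinner (cmat_adj (E \<mu>) *v x) y = cinner (E \<mu> *v x) y" .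
qed

lemma E_opnorm: assumes "\<mu> \<in> spec A" shows "opnorm (E \<mu>) \<le> 1"
proof (rule opnorm_leI)
  fix x
  have "(norm (E \<mu> *v x))^2 = Re (cinner (E \<mu> *v x) (E \<mu> *v x))" by (simp add: cinner_self)
  also have "\<dots> = Re (cinner (E \<mu> *v x) x)" by (simp only: proj_self[OF assms, of x x, symmetric])
  also have "\<dots> = (E \<mu> *v x) \<bullet> x" by (rule re_cinner)
  also have "\<dots> \<le> norm (E \<mu> *v x) * norm x" by (rule norm_cauchy_schwarz)
  finally have h: "(norm (E \<mu> *v x))^2 \<le> norm (E \<mu> *v x) * norm x" .
  show "norm (E \<mu> *v x) \<le> 1 * norm x"
  proof (cases "E \<mu> *v x = 0")
    case False
    then have "norm (E \<mu> *v x) > 0" by simp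
    then show ?thesis using h by (simp add: power2_eq_square)
  qed simp
qed simp

lemma spec_proj_E: assumes "\<mu> \<in> spec A" shows "spec_proj A \<mu> = E \<mu>"
  unfolding spec_proj_def
proof (rule the_equality)
  have r: "range (\<lambda>x. E \<mu> *v x) = {v. A *v v = \<mu> *s v}"
  proof
    show "range (\<lambda>x. E \<mu> *v x) \<subseteq> {v. A *v v = \<mu> *s v}" using E_range by auto
    show "{v. A *v v = \<mu> *s v} \<subseteq> range (\<lambda>x. E \<mu> *v x)"
    proof
      fix v assume "v \<in> {v. A *v v = \<mu> *s v}"
      then have "E \<mu> *v v = v" using E_eig[of v \<mu> \<mu>] assms by simp
      then show "v \<in> range (\<lambda>x. E \<mu> *v x)" by (metis rangeI)
    qed
  qed
  show "E \<mu> ** E \<mu> = E \<mu> \<and> cmat_adj (E \<mu>) = E \<mu> \<and> range (\<lambda>x. E \<mu> *v x) = {v. A *v v = \<mu> *s v}"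
    using E_idem[OF assms] E_adj[OF assms] r by simp
  fix F
  assume F: "F ** F = F \<and> cmat_adj F = F \<and> range (\<lambda>x. F *v x) = {v. A *v v = \<mu> *s v}"
  then have F1: "F ** F = F" and F2: "cmat_adj F = F" and F3: "range (\<lambda>x. F *v x) = {v. A *v v = \<mu> *s v}"
    by auto
  have fix_range: "P *v y = y" if h1: "P ** P = P" and h2: "y \<in> range (\<lambda>x. P *v x)" for P :: "complex^'n^'n" and y
  proof -
    obtain z where "y = P *v z" using h2 by auto
    then show ?thesis using h1 by (simp add: matrix_vector_mul_assoc)
  qed
  have FE: "F ** E \<mu> = E \<mu>"
  proof (rule mat_eq_mv)
    fix x
    have "E \<mu> *v x \<in> {v. A *v v = \<mu> *s v}" using E_range by simp
    then have "E \<mu> *v x \<in> range (\<lambda>x. F *v x)" by (simp only: F3)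
    then have "F *v (E \<mu> *v x) = E \<mu> *v x" by (rule fix_range[OF F1])
    then show "(F ** E \<mu>) *v x = E \<mu> *v x" by (simp add: matrix_vector_mul_assoc[symmetric])
  qed
  have EF: "E \<mu> ** F = F"
  proof (rule mat_eq_mv)
    fix x
    have "F *v x \<in> range (\<lambda>x. F *v x)" by simp
    then have "F *v x \<in> range (\<lambda>x. E \<mu> *v x)" by (simp only: F3 r)
    then have "E \<mu> *v (F *v x) = F *v x" by (rule fix_range[OF E_idem[OF assms]])
    then show "(E \<mu> ** F) *v x = F *v x" by (simp add: matrix_vector_mul_assoc[symmetric])
  qed
  have "F = cmat_adj (E \<mu> ** F)" by (simp only: EF F2)
  also have "\<dots> = cmat_adj F ** cmat_adj (E \<mu>)" by (rule adj_mult)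
  also have "\<dots> = F ** E \<mu>" by (simp only: F2 E_adj[OF assms])
  also have "\<dots> = E \<mu>" by (rule FE)
  finally show "F = E \<mu>" .
qed

lemma matpow_A: "matpow (cmat_scale s A) k = (\<Sum>\<mu>\<in>spec A. cmat_scale ((s*\<mu>)^k) (E \<mu>))"
proof (rule mat_eq_on_eig)
  fix v \<alpha> assume v: "A *v v = \<alpha> *s v" and \<alpha>: "\<alpha> \<in> spec A"
  have "matpow (cmat_scale s A) k *v v = (s*\<alpha>)^k *s v"
  proof (induction k)
    case 0 then show ?case by (simp add: vec_eq_iff)
  next
    case (Suc k)
    have "matpow (cmat_scale s A) (Suc k) *v v = cmat_scale s A *v (matpow (cmat_scale s A) k *v v)"
      by (simp add: matrix_vector_mul_assoc)
    also have "\<dots> = (s*\<alpha>)^k *s (s *s (A *v v))" using Suc by (simp add: mv_smult cmat_scale_mv)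
    also have "\<dots> = (s*\<alpha>)^Suc k *s v" using v by (simp add: smult_smult mult_ac)
    finally show ?case .
  qed
  moreover have "(\<Sum>\<mu>\<in>spec A. cmat_scale ((s*\<mu>)^k) (E \<mu>)) *v v = (s*\<alpha>)^k *s v"
  proof -
    have "(\<Sum>\<mu>\<in>spec A. cmat_scale ((s*\<mu>)^k) (E \<mu>)) *v v = (\<Sum>\<mu>\<in>spec A. (s*\<mu>)^k *s (E \<mu> *v v))"
      by (simp add: sum_mv cmat_scale_mv)
    also have "\<dots> = (\<Sum>\<mu>\<in>spec A. if \<mu> = \<alpha> then (s*\<alpha>)^k *s v else 0)"
      by (intro sum.cong refl) (auto simp: E_eig[OF v \<alpha>])
    also have "\<dots> = (s*\<alpha>)^k *s v" using \<alpha> spec_finite by simp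
    finally show ?thesis .
  qed
  ultimately show "matpow (cmat_scale s A) k *v v = (\<Sum>\<mu>\<in>spec A. cmat_scale ((s*\<mu>)^k) (E \<mu>)) *v v"
    by simp
qed

lemma cmat_scale_bl: "bounded_linear (\<lambda>c. cmat_scale c (M::complex^'n^'n))"
proof -
  have "linear (\<lambda>c. cmat_scale c (M::complex^'n^'n))"
    by (rule linearI) (simp_all add: cmat_scale_def vec_eq_iff distrib_right)
  then show ?thesis using linear_conv_bounded_linear by blast
qed

lemma scale_scaleR: "r *\<^sub>R cmat_scale c M = cmat_scale (r *\<^sub>R c) M"
  by (simp add: cmat_scale_def vec_eq_iff)

lemma mexp_A: "mexp (cmat_scale s A) = (\<Sum>\<mu>\<in>spec A. cmat_scale (exp (s*\<mu>)) (E \<mu>))"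
proof -
  have "(\<lambda>k. scaleR (inverse (fact k)) (matpow (cmat_scale s A) k)) sums (\<Sum>\<mu>\<in>spec A. cmat_scale (exp (s*\<mu>)) (E \<mu>))"
  proof -
    have "(\<lambda>k. \<Sum>\<mu>\<in>spec A. cmat_scale ((s*\<mu>)^k /\<^sub>R fact k) (E \<mu>)) sums (\<Sum>\<mu>\<in>spec A. cmat_scale (exp (s*\<mu>)) (E \<mu>))"
      by (intro sums_sum bounded_linear.sums[OF cmat_scale_bl] exp_converges)
    moreover have "\<And>k. (\<Sum>\<mu>\<in>spec A. cmat_scale ((s*\<mu>)^k /\<^sub>R fact k) (E \<mu>)) = scaleR (inverse (fact k)) (matpow (cmat_scale s A) k)"
      by (simp add: matpow_A scaleR_sum_right scale_scaleR)
    ultimately show ?thesis by simp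
  qed
  then show ?thesis using mexp_sums[of "cmat_scale s A"] sums_unique2 by blast
qed

end


lemma mm_add_left: "((M::complex^'n^'n) + P) ** Q = M ** Q + P ** Q"
  by (simp add: matrix_matrix_mult_def vec_eq_iff distrib_right sum.distrib)

lemma mm_sum_left: "(\<Sum>i\<in>S. (f i::complex^'n^'n)) ** M = (\<Sum>i\<in>S. f i ** M)"
proof (induction S rule: infinite_finite_induct)
  case (insert a S) then show ?case by (simp add: mm_add_left)
qed (simp_all add: matrix_matrix_mult_def vec_eq_iff)

lemma mm_sum_right: "(M::complex^'n^'n) ** (\<Sum>i\<in>S. f i) = (\<Sum>i\<in>S. M ** f i)"
proof (induction S rule: infinite_finite_induct)
  case (insert a S) then show ?case by (simp add: matrix_add_ldistrib)
qed (simp_all add: matrix_matrix_mult_def vec_eq_iff)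

lemma scale_mm_left: "cmat_scale c (M::complex^'n^'n) ** P = cmat_scale c (M ** P)"
  by (simp add: cmat_scale_def matrix_matrix_mult_def vec_eq_iff sum_distrib_left mult.assoc)

lemma scale_mm_right: "(M::complex^'n^'n) ** cmat_scale c P = cmat_scale c (M ** P)"
  by (simp add: cmat_scale_def matrix_matrix_mult_def vec_eq_iff sum_distrib_left mult_ac)

lemma scale_scale: "cmat_scale a (cmat_scale b (M::complex^'n^'n)) = cmat_scale (a*b) M"
  by (simp add: cmat_scale_def vec_eq_iff mult.assoc)

lemma scale_sum: "cmat_scale c (\<Sum>i\<in>S. (f i::complex^'n^'n)) = (\<Sum>i\<in>S. cmat_scale c (f i))"
  by (simp add: cmat_scale_def vec_eq_iff sum_component sum_distrib_left)

lemma mm_diff_right: "(M::complex^'n^'n) ** (P - Q) = M ** P - M ** Q"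
  by (simp add: matrix_matrix_mult_def vec_eq_iff right_diff_distrib sum_subtractf)

lemma mm_diff_left: "((M::complex^'n^'n) - P) ** Q = M ** Q - P ** Q"
  by (simp add: matrix_matrix_mult_def vec_eq_iff left_diff_distrib sum_subtractf)

lemma words_Suc: "{ls. length ls = Suc k \<and> set ls \<subseteq> S} = (\<lambda>(x, xs). x # xs) ` (S \<times> {ls. length ls = k \<and> set ls \<subseteq> S})"
  by (auto simp: length_Suc_conv image_iff)

lemma inj_Cons2: "inj_on (\<lambda>(x, xs). x # xs) X"
  by (auto simp: inj_on_def)

lemma sum_words_Suc:
  "(\<Sum>ls\<in>{ls. length ls = Suc k \<and> set ls \<subseteq> S}. f ls) = (\<Sum>x\<in>S. \<Sum>xs\<in>{ls. length ls = k \<and> set ls \<subseteq> S}. f (x # xs))"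
proof -
  have "(\<Sum>ls\<in>{ls. length ls = Suc k \<and> set ls \<subseteq> S}. f ls) = (\<Sum>p\<in>S \<times> {ls. length ls = k \<and> set ls \<subseteq> S}. f (fst p # snd p))"
    unfolding words_Suc by (subst sum.reindex[OF inj_Cons2]) (simp add: case_prod_beta)
  also have "\<dots> = (\<Sum>x\<in>S. \<Sum>xs\<in>{ls. length ls = k \<and> set ls \<subseteq> S}. f (x # xs))"
    by (subst sum.cartesian_product) (simp add: case_prod_beta)
  finally show ?thesis .
qed

lemma words_finite: "finite S \<Longrightarrow> finite {ls. length ls = k \<and> set ls \<subseteq> S}"
  using finite_lists_length_eq[of S k] by (simp add: conj_commute)

lemma count_sums:
  assumes "set ls \<subseteq> S" "finite S"
  shows "sum_list ls = (\<Sum>\<mu>\<in>S. of_nat (count_list ls \<mu>) * (\<mu>::complex)) \<and> (\<Sum>\<mu>\<in>S. count_list ls \<mu>) = length ls"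
  using assms(1)
proof (induction ls)
  case Nil then show ?case by simp
next
  case (Cons x xs)
  then have x: "x \<in> S" and xs: "set xs \<subseteq> S" by auto
  have c: "count_list (x # xs) \<mu> = count_list xs \<mu> + (if x = \<mu> then 1 else 0)" for \<mu> by simp
  have "(\<Sum>\<mu>\<in>S. of_nat (count_list (x # xs) \<mu>) * \<mu>) = (\<Sum>\<mu>\<in>S. of_nat (count_list xs \<mu>) * \<mu>) + (\<Sum>\<mu>\<in>S. (if x = \<mu> then \<mu> else 0))"
  proof -
    have "of_nat (count_list (x # xs) \<mu>) * \<mu> = of_nat (count_list xs \<mu>) * \<mu> + (if x = \<mu> then \<mu> else 0)" for \<mu>
      by (simp add: distrib_right)
    then show ?thesis by (simp add: sum.distrib)
  qed
  also have "(\<Sum>\<mu>\<in>S. (if x = \<mu> then \<mu> else 0)) = x" using x assms(2) by simp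
  finally have 1: "(\<Sum>\<mu>\<in>S. of_nat (count_list (x # xs) \<mu>) * \<mu>) = (\<Sum>\<mu>\<in>S. of_nat (count_list xs \<mu>) * \<mu>) + x" .
  have "(\<Sum>\<mu>\<in>S. count_list (x # xs) \<mu>) = (\<Sum>\<mu>\<in>S. count_list xs \<mu>) + (\<Sum>\<mu>\<in>S. (if x = \<mu> then 1 else 0))"
    by (simp only: c sum.distrib)
  also have "(\<Sum>\<mu>\<in>S. (if x = \<mu> then 1 else (0::nat))) = 1" using x assms(2) by simp
  finally have 2: "(\<Sum>\<mu>\<in>S. count_list (x # xs) \<mu>) = (\<Sum>\<mu>\<in>S. count_list xs \<mu>) + 1" .
  show ?case using Cons.IH[OF xs] 1 2 by simp
qed

lemma avg_in_chN:
  assumes "set ls \<subseteq> S" "finite S" "length ls = N"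
  shows "sum_list ls / of_nat N \<in> chN N S"
proof -
  have cs: "sum_list ls = (\<Sum>\<mu>\<in>S. of_nat (count_list ls \<mu>) * \<mu>)" "(\<Sum>\<mu>\<in>S. count_list ls \<mu>) = N"
    using count_sums[OF assms(1,2)] assms(3) by auto
  have "sum_list ls / of_nat N = (\<Sum>\<mu>\<in>S. (of_nat (count_list ls \<mu>) / of_nat N) * \<mu>)"
    by (simp add: cs(1) sum_divide_distrib)
  then show ?thesis unfolding chN_def using cs(2) by blast
qed

lemma chN_finite:
  assumes "finite S"
  shows "finite (chN N S)"
proof -
  let ?F = "\<lambda>m. (\<Sum>\<mu>\<in>S. (of_nat (m \<mu>) / of_nat N) * (\<mu>::complex))"
  have "chN N S \<subseteq> ?F ` (PiE S (\<lambda>_. {0..N}))"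
  proof
    fix c assume "c \<in> chN N S"
    then obtain m where c: "c = ?F m" and m: "(\<Sum>\<mu>\<in>S. m \<mu>) = N" unfolding chN_def by blast
    have "\<forall>\<mu>\<in>S. m \<mu> \<in> {0..N}"
    proof
      fix \<mu> assume "\<mu> \<in> S"
      then have "m \<mu> \<le> (\<Sum>\<mu>\<in>S. m \<mu>)" by (rule member_le_sum) (simp_all add: assms)
      then show "m \<mu> \<in> {0..N}" using m by simp
    qed
    then have "restrict m S \<in> PiE S (\<lambda>_. {0..N})" by (simp only: restrict_PiE_iff)
    moreover have "c = ?F (restrict m S)" unfolding c by (intro sum.cong) auto
    ultimately show "c \<in> ?F ` (PiE S (\<lambda>_. {0..N}))" by (rule rev_image_eqI[where f="?F"])
  qed
  moreover have "finite (?F ` (PiE S (\<lambda>_. {0..N})))" by (intro finite_imageI finite_PiE assms) simp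
  ultimately show ?thesis by (rule finite_subset)
qed

lemma sum_chN_words:
  assumes "finite S"
  shows "(\<Sum>c\<in>chN N S. \<Sum>ls\<in>{ls. length ls = N \<and> set ls \<subseteq> S \<and> sum_list ls / of_nat N = c}. f ls)
       = (\<Sum>ls\<in>{ls. length ls = N \<and> set ls \<subseteq> S}. f ls)"
proof -
  let ?W = "\<lambda>c. {ls. length ls = N \<and> set ls \<subseteq> S \<and> sum_list ls / of_nat N = c}"
  have U: "(\<Union>c\<in>chN N S. ?W c) = {ls. length ls = N \<and> set ls \<subseteq> S}"
    using avg_in_chN[OF _ assms] by auto
  have fW: "finite (?W c)" for c
    by (rule finite_subset[OF _ words_finite[OF assms, of N]]) auto
  have "(\<Sum>ls\<in>(\<Union>c\<in>chN N S. ?W c). f ls) = (\<Sum>c\<in>chN N S. \<Sum>ls\<in>?W c. f ls)"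
    by (rule sum.UNION_disjoint) (auto simp: chN_finite[OF assms] fW)
  then show ?thesis using U by simp
qed


lemma exp_conv: "real l * exp x - (real l - 1) \<le> exp (real l * x)"
proof (induction l)
  case 0 then show ?case by simp
next
  case (Suc l)
  define e where "e = exp x"
  have e: "e > 0" unfolding e_def by simp
  have IH: "real l * e - (real l - 1) \<le> exp (real l * x)" using Suc e_def by simp
  have "(real l * e - (real l - 1)) * e \<le> exp (real l * x) * e"
    by (rule mult_right_mono[OF IH]) (use e in simp)
  moreover have "(real l * e - (real l - 1)) * e - (real (Suc l) * e - (real (Suc l) - 1)) = real l * (e - 1)^2"
    by (simp add: algebra_simps power2_eq_square)
  moreover have "real l * (e - 1)^2 \<ge> 0" by simp
  moreover have "exp (real l * x) * e = exp (real (Suc l) * x)"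
    by (simp add: e_def exp_add[symmetric] algebra_simps)
  ultimately show ?case unfolding e_def[symmetric] by linarith
qed

lemma num_bound:
  fixes \<beta> b :: real
  assumes "l \<le> n" "1 \<le> N" "0 \<le> \<beta>" "\<beta> * real N \<le> b"
  shows "real l * exp \<beta> * (exp \<beta> + (real l - 1) * (exp \<beta> - 1)) ^ (N - 1) \<le> real n * exp (real n * b)"
proof (cases "l = 0")
  case True then show ?thesis by simp
next
  case False
  then have l1: "real l \<ge> 1" by simp
  have "0 \<le> \<beta> * real N" using assms(3) by simp
  then have b0: "b \<ge> 0" using assms(4) by linarith
  define r where "r = exp \<beta> + (real l - 1) * (exp \<beta> - 1)"
  have eb: "exp \<beta> \<ge> 1" using assms(3) by simp
  have r0: "r \<ge> 0" unfolding r_def using eb l1 by (simp add: add_nonneg_nonneg)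
  have rle: "r \<le> exp (real l * \<beta>)"
    using exp_conv[of l \<beta>] unfolding r_def by (simp add: algebra_simps)
  have gle: "exp \<beta> \<le> exp (real l * \<beta>)" using l1 assms(3) by (simp add: mult_le_cancel_right1)
  have "real l * exp \<beta> * r ^ (N - 1) \<le> real l * exp (real l * \<beta>) * exp (real l * \<beta>) ^ (N - 1)"
    by (intro mult_mono power_mono rle gle) (use r0 in auto)
  also have "\<dots> = real l * exp (real l * \<beta>) ^ N"
    using assms(2) by (simp add: power_Suc[symmetric] del: power_Suc)
  also have "exp (real l * \<beta>) ^ N = exp (real N * (real l * \<beta>))" by (rule exp_of_nat_mult[symmetric])
  also have "real l * exp (real N * (real l * \<beta>)) \<le> real n * exp (real n * b)"
  proof (intro mult_mono)
    show "real l \<le> real n" using assms(1) by simp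
    have "real N * (real l * \<beta>) = real l * (\<beta> * real N)" by simp
    also have "\<dots> \<le> real l * b" using assms(4) by (intro mult_left_mono) simp_all
    also have "\<dots> \<le> real n * b" using assms(1) b0 by (intro mult_right_mono) simp_all
    finally show "exp (real N * (real l * \<beta>)) \<le> exp (real n * b)" by simp
  qed simp_all
  finally show ?thesis unfolding r_def .
qed


locale herm2 = herm A for A :: "complex^'n^'n" +
  fixes B :: "complex^'n^'n" and N :: nat
  assumes N1: "N \<ge> 1"
begin

definition G :: "complex^'n^'n" where "G = mexp (cmat_scale (1 / of_nat N) B)"
definition MW :: "complex list \<Rightarrow> complex^'n^'n" where "MW ls = foldr (\<lambda>\<mu> P. E \<mu> ** G ** P) ls (mat 1)"

lemma MW_Nil: "MW [] = mat 1" by (simp add: MW_def)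
lemma MW_Cons: "MW (\<mu> # ls) = E \<mu> ** G ** MW ls" by (simp add: MW_def)

lemma Mword_eq: "set ls \<subseteq> spec A \<Longrightarrow> Mword A B N ls = MW ls"
proof (induction ls)
  case Nil then show ?case by (simp add: Mword_def MW_def)
next
  case (Cons \<mu> ls)
  then have "Mword A B N ls = MW ls" "\<mu> \<in> spec A" by auto
  then show ?case by (simp add: Mword_def MW_Cons G_def spec_proj_E)
qed

lemma words0: "{ls. length ls = 0 \<and> set ls \<subseteq> S} = {[]}" by auto

lemma scale_one: "cmat_scale 1 M = M" by (simp add: cmat_scale_def vec_eq_iff)

lemma expand:
  "matpow (mexp (cmat_scale (t / of_nat N) A) ** G) k
     = (\<Sum>ls\<in>{ls. length ls = k \<and> set ls \<subseteq> spec A}. cmat_scale (exp (t * (sum_list ls / of_nat N))) (MW ls))"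
proof (induction k)
  case 0 then show ?case by (simp only: words0) (simp add: scale_one MW_Nil)
next
  case (Suc k)
  let ?W = "{ls. length ls = k \<and> set ls \<subseteq> spec A}"
  let ?e = "\<lambda>ls. exp (t * (sum_list ls / of_nat N))"
  define X where "X = mexp (cmat_scale (t / of_nat N) A)"
  have X: "X = (\<Sum>\<mu>\<in>spec A. cmat_scale (exp (t / of_nat N * \<mu>)) (E \<mu>))"
    unfolding X_def by (rule mexp_A)
  have XM: "(X ** G) ** MW ls = (\<Sum>\<mu>\<in>spec A. cmat_scale (exp (t / of_nat N * \<mu>)) (MW (\<mu> # ls)))" for ls
    by (simp add: X mm_sum_left scale_mm_left MW_Cons)
  have ex: "?e ls * exp (t / of_nat N * \<mu>) = ?e (\<mu> # ls)" for ls \<mu>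
  proof -
    have "t * (sum_list ls / of_nat N) + t / of_nat N * \<mu> = t * (sum_list (\<mu> # ls) / of_nat N)"
      by (simp add: algebra_simps add_divide_distrib)
    then show ?thesis by (simp add: exp_add[symmetric])
  qed
  have "matpow (X ** G) (Suc k) = (X ** G) ** (\<Sum>ls\<in>?W. cmat_scale (?e ls) (MW ls))"
    using Suc by (simp add: X_def)
  also have "\<dots> = (\<Sum>ls\<in>?W. cmat_scale (?e ls) ((X ** G) ** MW ls))"
    by (simp add: mm_sum_right scale_mm_right)
  also have "\<dots> = (\<Sum>ls\<in>?W. \<Sum>\<mu>\<in>spec A. cmat_scale (?e (\<mu> # ls)) (MW (\<mu> # ls)))"
    by (simp only: XM scale_sum scale_scale ex)
  also have "\<dots> = (\<Sum>\<mu>\<in>spec A. \<Sum>ls\<in>?W. cmat_scale (?e (\<mu> # ls)) (MW (\<mu> # ls)))"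
    by (rule sum.swap)
  also have "\<dots> = (\<Sum>ls\<in>{ls. length ls = Suc k \<and> set ls \<subseteq> spec A}. cmat_scale (?e ls) (MW ls))"
    by (rule sum_words_Suc[symmetric])
  finally show ?case by (simp add: X_def)
qed

lemma part1:
  "matpow (mexp (cmat_scale (t / of_nat N) A) ** mexp (cmat_scale (1 / of_nat N) B)) N
     = (\<Sum>c\<in>chN N (spec A). cmat_scale (exp (t * c)) (MN A B N c))"
proof -
  have "(\<Sum>c\<in>chN N (spec A). cmat_scale (exp (t * c)) (MN A B N c))
      = (\<Sum>c\<in>chN N (spec A). \<Sum>ls\<in>{ls. length ls = N \<and> set ls \<subseteq> spec A \<and> sum_list ls / of_nat N = c}.
            cmat_scale (exp (t * (sum_list ls / of_nat N))) (MW ls))"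
  proof (rule sum.cong[OF refl])
    fix c
    show "cmat_scale (exp (t * c)) (MN A B N c) = (\<Sum>ls\<in>{ls. length ls = N \<and> set ls \<subseteq> spec A \<and> sum_list ls / of_nat N = c}.
            cmat_scale (exp (t * (sum_list ls / of_nat N))) (MW ls))"
      unfolding MN_def scale_sum by (rule sum.cong[OF refl]) (simp add: Mword_eq)
  qed
  also have "\<dots> = (\<Sum>ls\<in>{ls. length ls = N \<and> set ls \<subseteq> spec A}. cmat_scale (exp (t * (sum_list ls / of_nat N))) (MW ls))"
    by (rule sum_chN_words[OF spec_finite])
  also have "\<dots> = matpow (mexp (cmat_scale (t / of_nat N) A) ** mexp (cmat_scale (1 / of_nat N) B)) N"
    using expand[of t N] by (simp add: G_def)
  finally show ?thesis by simp
qed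

end


context herm2
begin

definition \<beta> where "\<beta> = opnorm (cmat_scale (1 / of_nat N) B)"
definition g where "g = exp \<beta>"
definition d where "d = exp \<beta> - 1"

lemma G_norm: "opnorm G \<le> g"
  unfolding G_def g_def \<beta>_def by (rule mexp_opnorm)

lemma G1_norm: "opnorm (G - mat 1) \<le> d"
  unfolding G_def d_def \<beta>_def by (rule mexp_minus_opnorm)

lemma w_bound:
  assumes "\<mu> \<in> spec A" "\<nu> \<in> spec A"
  shows "opnorm (E \<mu> ** G ** E \<nu>) \<le> (if \<mu> = \<nu> then g else d)"
proof (cases "\<mu> = \<nu>")
  case True
  have "opnorm (E \<mu> ** G ** E \<nu>) \<le> opnorm (E \<mu> ** G) * opnorm (E \<nu>)" by (rule opnorm_mult)
  also have "\<dots> \<le> (opnorm (E \<mu>) * opnorm G) * 1"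
    by (intro mult_mono opnorm_mult E_opnorm assms) (simp_all add: opnorm_ge0)
  also have "\<dots> \<le> 1 * g"
  proof -
    have "opnorm (E \<mu>) * opnorm G \<le> 1 * g" by (rule mult_mono[OF E_opnorm[OF assms(1)] G_norm]) (simp_all add: opnorm_ge0)
    then show ?thesis by simp
  qed
  finally show ?thesis using True by simp
next
  case False
  have "E \<mu> ** G ** E \<nu> = E \<mu> ** (G - mat 1) ** E \<nu>"
    by (simp add: mm_diff_right mm_diff_left E_orth[OF False])
  then have "opnorm (E \<mu> ** G ** E \<nu>) = opnorm (E \<mu> ** (G - mat 1) ** E \<nu>)" by simp
  also have "\<dots> \<le> opnorm (E \<mu> ** (G - mat 1)) * opnorm (E \<nu>)" by (rule opnorm_mult)
  also have "\<dots> \<le> (opnorm (E \<mu>) * opnorm (G - mat 1)) * 1"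
    by (intro mult_mono opnorm_mult E_opnorm assms) (simp_all add: opnorm_ge0)
  also have "\<dots> \<le> 1 * d"
  proof -
    have "opnorm (E \<mu>) * opnorm (G - mat 1) \<le> 1 * d" by (rule mult_mono[OF E_opnorm[OF assms(1)] G1_norm]) (simp_all add: opnorm_ge0)
    then show ?thesis by simp
  qed
  finally show ?thesis using False by simp
qed

lemma MW_CC:
  assumes "\<nu> \<in> spec A"
  shows "MW (\<mu> # \<nu> # ls) = (E \<mu> ** G ** E \<nu>) ** MW (\<nu> # ls)"
proof -
  have "(E \<mu> ** G ** E \<nu>) ** MW (\<nu> # ls) = (E \<mu> ** G) ** ((E \<nu> ** E \<nu>) ** (G ** MW ls))"
    by (simp add: MW_Cons matrix_mul_assoc)
  also have "\<dots> = MW (\<mu> # \<nu> # ls)"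
    by (simp add: E_idem[OF assms] MW_Cons matrix_mul_assoc)
  finally show ?thesis by simp
qed

definition l where "l = card (spec A)"
definition r where "r = g + (real l - 1) * d"

lemma g0: "g \<ge> 0" by (simp add: g_def)
lemma d0: "d \<ge> 0" using opnorm_ge0 by (simp add: d_def \<beta>_def)

lemma sum_w: "\<mu> \<in> spec A \<Longrightarrow> (\<Sum>\<nu>\<in>spec A. (if \<mu> = \<nu> then g else d)) = r"
proof -
  assume m: "\<mu> \<in> spec A"
  have "(\<Sum>\<nu>\<in>spec A. (if \<mu> = \<nu> then g else d)) = g + (\<Sum>\<nu>\<in>spec A - {\<mu>}. (if \<mu> = \<nu> then g else d))"
    using m spec_finite by (simp add: sum.remove)
  also have "(\<Sum>\<nu>\<in>spec A - {\<mu>}. (if \<mu> = \<nu> then g else d)) = (\<Sum>\<nu>\<in>spec A - {\<mu>}. d)"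
    by (rule sum.cong) auto
  also have "\<dots> = real (l - 1) * d" using m spec_finite by (simp add: l_def)
  also have "real (l - 1) = real l - 1"
  proof -
    have "l \<ge> 1" unfolding l_def using m spec_finite card_gt_0_iff[of "spec A"] by auto
    then show ?thesis by (simp add: of_nat_diff)
  qed
  finally show ?thesis by (simp add: r_def)
qed

lemma r0: "r \<ge> 0"
proof (cases "l = 0")
  case True
  then show ?thesis by (simp add: r_def g_def d_def)
next
  case False
  then show ?thesis using g0 d0 by (simp add: r_def)
qed

lemma Sk: "\<nu> \<in> spec A \<Longrightarrow> (\<Sum>ls\<in>{ls. length ls = k \<and> set ls \<subseteq> spec A}. opnorm (MW (\<nu> # ls))) \<le> g * r ^ k"
proof (induction k arbitrary: \<nu>)
  case 0
  have "opnorm (MW [\<nu>]) \<le> opnorm (E \<nu> ** G) * opnorm (mat 1 :: complex^'n^'n)"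
    by (simp add: MW_Cons MW_Nil opnorm_mult del: matrix_mul_rid)
  also have "\<dots> \<le> (opnorm (E \<nu>) * opnorm G) * 1"
    by (intro mult_mono opnorm_mult opnorm_id) (simp_all add: opnorm_ge0)
  also have "\<dots> \<le> 1 * g"
  proof -
    have "opnorm (E \<nu>) * opnorm G \<le> 1 * g" by (rule mult_mono[OF E_opnorm[OF "0.prems"] G_norm]) (simp_all add: opnorm_ge0)
    then show ?thesis by simp
  qed
  finally show ?case by (simp only: words0) simp
next
  case (Suc k)
  let ?W = "{ls. length ls = k \<and> set ls \<subseteq> spec A}"
  have "(\<Sum>ls\<in>{ls. length ls = Suc k \<and> set ls \<subseteq> spec A}. opnorm (MW (\<nu> # ls)))
      = (\<Sum>\<nu>'\<in>spec A. \<Sum>ls\<in>?W. opnorm (MW (\<nu> # \<nu>' # ls)))"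
    by (rule sum_words_Suc)
  also have "\<dots> \<le> (\<Sum>\<nu>'\<in>spec A. \<Sum>ls\<in>?W. (if \<nu> = \<nu>' then g else d) * opnorm (MW (\<nu>' # ls)))"
  proof (intro sum_mono)
    fix \<nu>' ls assume n': "\<nu>' \<in> spec A"
    have "opnorm (MW (\<nu> # \<nu>' # ls)) \<le> opnorm (E \<nu> ** G ** E \<nu>') * opnorm (MW (\<nu>' # ls))"
      unfolding MW_CC[OF n'] by (rule opnorm_mult)
    also have "\<dots> \<le> (if \<nu> = \<nu>' then g else d) * opnorm (MW (\<nu>' # ls))"
      by (intro mult_right_mono w_bound Suc.prems n' opnorm_ge0)
    finally show "opnorm (MW (\<nu> # \<nu>' # ls)) \<le> (if \<nu> = \<nu>' then g else d) * opnorm (MW (\<nu>' # ls))" .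
  qed
  also have "\<dots> = (\<Sum>\<nu>'\<in>spec A. (if \<nu> = \<nu>' then g else d) * (\<Sum>ls\<in>?W. opnorm (MW (\<nu>' # ls))))"
    by (simp add: sum_distrib_left)
  also have "\<dots> \<le> (\<Sum>\<nu>'\<in>spec A. (if \<nu> = \<nu>' then g else d) * (g * r ^ k))"
    by (intro sum_mono mult_left_mono Suc.IH) (use g0 d0 in auto)
  also have "\<dots> = r * (g * r ^ k)"
    by (simp add: sum_distrib_right[symmetric] sum_w[OF Suc.prems])
  finally show ?case by (simp add: algebra_simps)
qed

lemma total: "(\<Sum>ls\<in>{ls. length ls = N \<and> set ls \<subseteq> spec A}. opnorm (MW ls)) \<le> real l * g * r ^ (N - 1)"
proof -
  have NS: "N = Suc (N - 1)" using N1 by simp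
  have "(\<Sum>ls\<in>{ls. length ls = N \<and> set ls \<subseteq> spec A}. opnorm (MW ls))
      = (\<Sum>\<nu>\<in>spec A. \<Sum>ls\<in>{ls. length ls = N - 1 \<and> set ls \<subseteq> spec A}. opnorm (MW (\<nu> # ls)))"
    by (subst NS) (rule sum_words_Suc)
  also have "\<dots> \<le> (\<Sum>\<nu>\<in>spec A. g * r ^ (N - 1))"
    by (intro sum_mono Sk)
  also have "\<dots> = real l * g * r ^ (N - 1)" by (simp add: l_def)
  finally show ?thesis .
qed

lemma part2:
  "(\<Sum>c\<in>chN N (spec A). opnorm (MN A B N c)) \<le> real CARD('n) * exp (real CARD('n) * opnorm B)"
proof -
  have "(\<Sum>c\<in>chN N (spec A). opnorm (MN A B N c))
      \<le> (\<Sum>c\<in>chN N (spec A). \<Sum>ls\<in>{ls. length ls = N \<and> set ls \<subseteq> spec A \<and> sum_list ls / of_nat N = c}. opnorm (MW ls))"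
  proof (rule sum_mono)
    fix c
    have "MN A B N c = (\<Sum>ls\<in>{ls. length ls = N \<and> set ls \<subseteq> spec A \<and> sum_list ls / of_nat N = c}. MW ls)"
      unfolding MN_def by (rule sum.cong[OF refl]) (simp add: Mword_eq)
    moreover have fin: "finite {ls. length ls = N \<and> set ls \<subseteq> spec A \<and> sum_list ls / of_nat N = c}"
      by (rule finite_subset[OF _ words_finite[OF spec_finite, of N]]) auto
    ultimately show "opnorm (MN A B N c) \<le> (\<Sum>ls\<in>{ls. length ls = N \<and> set ls \<subseteq> spec A \<and> sum_list ls / of_nat N = c}. opnorm (MW ls))"
      using opnorm_sum[OF fin, of MW] by simp
  qed
  also have "\<dots> = (\<Sum>ls\<in>{ls. length ls = N \<and> set ls \<subseteq> spec A}. opnorm (MW ls))"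
    by (rule sum_chN_words[OF spec_finite])
  also have "\<dots> \<le> real l * g * r ^ (N - 1)" by (rule total)
  also have "\<dots> \<le> real CARD('n) * exp (real CARD('n) * opnorm B)"
  proof -
    have b: "\<beta> * real N \<le> opnorm B"
    proof -
      have "\<beta> \<le> cmod (1 / of_nat N) * opnorm B" unfolding \<beta>_def by (rule opnorm_scale)
      then have "\<beta> \<le> opnorm B / real N" by (simp add: norm_divide)
      then show ?thesis using N1 by (simp add: field_simps)
    qed
    have b0: "0 \<le> \<beta>" unfolding \<beta>_def by (rule opnorm_ge0)
    have lc: "l \<le> CARD('n)" unfolding l_def by (rule spec_card)
    show ?thesis
      using num_bound[OF lc N1 b0 b] by (simp add: g_def r_def d_def)
  qed
  finally show ?thesis .
qed

end

theorem lemma6p2: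
  fixes A B :: "complex^'n^'n" and N :: nat
  assumes "hermitian A" and "N \<ge> 1"
  shows "(\<forall>t::complex. matpow (mexp (cmat_scale (t / of_nat N) A) ** mexp (cmat_scale (1 / of_nat N) B)) N
           = (\<Sum>c\<in>chN N (spec A). cmat_scale (exp (t * c)) (MN A B N c)))
       \<and> (\<Sum>c\<in>chN N (spec A). opnorm (MN A B N c)) \<le> real CARD('n) * exp (real CARD('n) * opnorm B)"
proof -
  interpret h: herm2 A B N
    by unfold_locales (use assms in auto)
  show ?thesis using h.part1 h.part2 by blast
qed

end
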